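(* For every $\mathsf{T_{z}S}$-closed semigroup $X$, its center $Z(X)$ is chain-finite.
   Context: $\mathsf{T_{z}S}$ is the class of Hausdorff zero-dimensional topological semigroups. A semigroup $X$ is $\mathsf{T_{z}S}$-closed if for every isomorphic topological embedding of $X$ (discrete topology) into some $Y\in\mathsf{T_{z}S}$ the image is closed in $Y$. $Z(X)=\{z\in X:\forall x\in X\ (xz=zx)\}$. A subset $C$ is a chain if $xy\in\{x,y\}$ for $x,y\in C$; a semigroup is chain-finite if it contains no infinite chain. *)

theory Defs
  imports "HOL-Analysis.Analysis"
begin

definition topological_semigroup :: "'b topology \<Rightarrow> ('b \<Rightarrow> 'b \<Rightarrow> 'b) \<Rightarrow> bool" where
  "topological_semigroup T m \<longleftrightarrow>
     (\<forall>x\<in>topspace T. \<forall>y\<in>topspace T. m x y \<in> topspace T) \<and>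
     (\<forall>x\<in>topspace T. \<forall>y\<in>topspace T. \<forall>z\<in>topspace T. m (m x y) z = m x (m y z)) \<and>
     continuous_map (prod_topology T T) T (\<lambda>(x, y). m x y)"

definition TzS_semigroup :: "'b topology \<Rightarrow> ('b \<Rightarrow> 'b \<Rightarrow> 'b) \<Rightarrow> bool" where
  "TzS_semigroup T m \<longleftrightarrow> topological_semigroup T m \<and> Hausdorff_space T \<and> T dim_le 0"

definition TzS_closed_in :: "'b itself \<Rightarrow> 'a::semigroup_mult itself \<Rightarrow> bool" where
  "TzS_closed_in B A \<longleftrightarrow>
     (\<forall>(T::'b topology) m (h::'a \<Rightarrow> 'b).
        TzS_semigroup T m \<and> inj h \<and> range h \<subseteq> topspace T \<and>
        (\<forall>x y. h (x * y) = m (h x) (h y)) \<and>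
        embedding_map (discrete_topology UNIV) T h
        \<longrightarrow> closedin T (range h))"

text \<open>The target semigroups Y are taken with
  carrier in the type 'a set set; this is no loss of generality: WLOG Y is the
  closure of the image of X, and a Hausdorff space with a dense subset D injects
  into Pow (Pow D).\<close>
definition TzS_closed :: "'a::semigroup_mult itself \<Rightarrow> bool" where
  "TzS_closed A \<longleftrightarrow> TzS_closed_in TYPE('a set set) A"

definition center :: "'a::semigroup_mult set" where
  "center = {z. \<forall>x. x * z = z * x}"

definition is_chain :: "'a::times set \<Rightarrow> bool" where
  "is_chain C \<longleftrightarrow> (\<forall>x\<in>C. \<forall>y\<in>C. x * y \<in> {x, y})"

definition chain_finite :: "'a::times set \<Rightarrow> bool" where
  "chain_finite S \<longleftrightarrow> \<not> (\<exists>C. C \<subseteq> S \<and> is_chain C \<and> infinite C)"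

end

theory Submission imports Defs "HOL-Library.Ramsey" begin
definition pr :: "'a \<Rightarrow> 'a set set" where "pr x = {A. x \<in> A}"
definition sf :: "(nat \<Rightarrow> 'a) \<Rightarrow> 'a set set" where
  "sf s = {A. eventually (\<lambda>j. s j \<in> A) sequentially}"
definition Wn :: "'a set set \<Rightarrow> 'a set \<Rightarrow> 'a set set set" where
  "Wn F A = insert F {pr x | x. x \<in> A \<and> F \<notin> range pr}"
definition mY :: "('a::times) set set \<Rightarrow> 'a set set \<Rightarrow> 'a set set" where
  "mY F G = {A. \<exists>P\<in>F. \<exists>Q\<in>G. \<forall>p\<in>P. \<forall>q\<in>Q. p*q \<in> A}"

lemma sf_UNIV[simp]: "UNIV \<in> sf s" by (simp add: sf_def)
lemma sf_Int: "A \<in> sf s \<Longrightarrow> B \<in> sf s \<Longrightarrow> A \<inter> B \<in> sf s"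
  by (auto simp: sf_def eventually_conj)
lemma sf_const: "sf (\<lambda>j. x) = pr x" by (simp add: sf_def pr_def)
lemma sf_cong: "eventually (\<lambda>j. s j = t j) sequentially \<Longrightarrow> sf s = sf t"
proof -
  assume h: "eventually (\<lambda>j. s j = t j) sequentially"
  have "\<And>A. eventually (\<lambda>j. s j \<in> A) sequentially \<longleftrightarrow> eventually (\<lambda>j. t j \<in> A) sequentially"
  proof
    fix A assume "eventually (\<lambda>j. s j \<in> A) sequentially"
    with h show "eventually (\<lambda>j. t j \<in> A) sequentially" by (rule eventually_elim2) auto
  next
    fix A assume "eventually (\<lambda>j. t j \<in> A) sequentially"
    with h show "eventually (\<lambda>j. s j \<in> A) sequentially" by (rule eventually_elim2) auto
  qed
  then show ?thesis unfolding sf_def by auto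
qed
lemma sf_eq_pr: "sf s = pr x \<longleftrightarrow> eventually (\<lambda>j. s j = x) sequentially"
proof
  assume "sf s = pr x"
  then have "{x} \<in> sf s" by (simp add: pr_def)
  then show "eventually (\<lambda>j. s j = x) sequentially" by (simp add: sf_def)
next
  assume "eventually (\<lambda>j. s j = x) sequentially"
  then have "sf s = sf (\<lambda>j. x)" by (rule sf_cong)
  then show "sf s = pr x" by (simp add: sf_const)
qed
lemma pr_inj: "pr x = pr y \<longleftrightarrow> x = y"
proof
  assume "pr x = pr y"
  have "{x} \<in> pr x" by (simp add: pr_def)
  with \<open>pr x = pr y\<close> have "{x} \<in> pr y" by simp
  then show "x = y" by (simp add: pr_def)
qed simp

lemma mY_sf:
  assumes "\<And>i j. u i * v j = u i * v i \<or> u i * v j = u j * v j"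
  shows "mY (sf u) (sf v) = sf (\<lambda>j. u j * v j)"
proof (rule set_eqI, rule iffI)
  fix A assume "A \<in> mY (sf u) (sf v)"
  then obtain P Q where P: "eventually (\<lambda>j. u j \<in> P) sequentially" and Q: "eventually (\<lambda>j. v j \<in> Q) sequentially"
    and PQ: "\<forall>p\<in>P. \<forall>q\<in>Q. p*q \<in> A" by (auto simp: mY_def sf_def)
  from eventually_conj[OF P Q] PQ show "A \<in> sf (\<lambda>j. u j * v j)"
    by (auto simp: sf_def elim: eventually_mono)
next
  fix A assume "A \<in> sf (\<lambda>j. u j * v j)"
  then obtain K where K: "\<And>j. j \<ge> K \<Longrightarrow> u j * v j \<in> A" by (auto simp: sf_def eventually_sequentially)
  have "u ` {K..} \<in> sf u" "v ` {K..} \<in> sf v" by (auto simp: sf_def eventually_sequentially)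
  moreover have "\<forall>p\<in>u ` {K..}. \<forall>q\<in>v ` {K..}. p*q \<in> A"
  proof (intro ballI)
    fix p q assume "p \<in> u ` {K..}" "q \<in> v ` {K..}"
    then obtain i j where "i \<ge> K" "j \<ge> K" "p = u i" "q = v j" by auto
    then show "p*q \<in> A" using K assms[of i j] by auto
  qed
  ultimately show "A \<in> mY (sf u) (sf v)" unfolding mY_def by blast
qed

fun mul1 :: "'a option \<Rightarrow> 'a \<Rightarrow> 'a::times" where
  "mul1 None y = y" | "mul1 (Some x) y = x * y"
fun omul :: "'a option \<Rightarrow> 'a option \<Rightarrow> ('a::times) option" where
  "omul None b = b" | "omul (Some x) None = Some x" | "omul (Some x) (Some y) = Some (x*y)"

lemma mul1_assoc: "mul1 a y * z = mul1 a ((y::'a::semigroup_mult) * z)"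
  by (cases a) (simp_all add: mult.assoc)

locale cs =
  fixes e :: "nat \<Rightarrow> 'a::semigroup_mult"
  assumes cen: "\<And>x j. x * e j = e j * x"
    and einj: "inj e"
    and dir: "(\<forall>i j. i \<le> j \<longrightarrow> e i * e j = e i) \<or> (\<forall>i j. i \<le> j \<longrightarrow> e i * e j = e j)"
begin

definition "D1 \<longleftrightarrow> (\<forall>i j. i \<le> j \<longrightarrow> e i * e j = e i)"
definition "idx i j = (if D1 then min i j else max i j)"

lemma ee: "e i * e j = e (idx i j)"
proof (cases "i \<le> j")
  case True then show ?thesis using dir by (auto simp: idx_def D1_def min_def max_def)
next
  case False
  have "e i * e j = e j * e i" by (rule cen)
  then show ?thesis using dir False by (auto simp: idx_def D1_def min_def max_def)
qed

lemma idx_cases: "idx i j = i \<or> idx i j = j" by (auto simp: idx_def min_def max_def)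
lemma ee_idem: "e i * e i = e i" using ee[of i i] by (simp add: idx_def)

definition sig :: "'a option \<Rightarrow> nat \<Rightarrow> 'a" where "sig a = (\<lambda>j. mul1 a (e j))"
definition "Sg = {(\<lambda>j. x) | x. True} \<union> range sig"
definition "Y = sf ` Sg"

lemma sig_mul: "mul1 a (e i) * mul1 b (e j) = mul1 (omul a b) (e i * e j)"
proof (cases a; cases b)
  fix y assume "a = None" "b = Some y"
  then show ?thesis using cen[of y i] by (simp add: mult.assoc[symmetric])
next
  fix x y assume "a = Some x" "b = Some y"
  then have "mul1 a (e i) * mul1 b (e j) = x * (e i * y) * e j" by (simp add: mult.assoc)
  also have "\<dots> = x * (y * e i) * e j" using cen[of y i] by simp
  finally show ?thesis using \<open>a = Some x\<close> \<open>b = Some y\<close> by (simp add: mult.assoc)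
qed (simp_all add: mult.assoc)

lemma cst_sig: "x * mul1 b (e j) = mul1 (omul (Some x) b) (e j)"
  by (cases b) (simp_all add: mult.assoc)
lemma sig_cst: "mul1 a (e i) * x = mul1 (omul a (Some x)) (e i)"
proof (cases a)
  case None then show ?thesis using cen[of x i] by simp
next
  case (Some y) then show ?thesis using cen[of x i] by (simp add: mult.assoc)
qed

lemma pattern:
  assumes "u \<in> Sg" "v \<in> Sg"
  shows "\<exists>g. (\<forall>i j. g i j = i \<or> g i j = j) \<and> (\<forall>i j. u i * v j = u (g i j) * v (g i j))
     \<and> (\<forall>i. (\<forall>j\<ge>i. g i j = i) \<or> (\<forall>j\<ge>i. g i j = j))
     \<and> (\<forall>j. (\<forall>i\<ge>j. g i j = j) \<or> (\<forall>i\<ge>j. g i j = i))"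
proof -
  consider x y where "u = (\<lambda>j. x)" "v = (\<lambda>j. y)" | x b where "u = (\<lambda>j. x)" "v = sig b"
    | a y where "u = sig a" "v = (\<lambda>j. y)" | a b where "u = sig a" "v = sig b"
    using assms unfolding Sg_def by blast
  then show ?thesis
  proof cases
    case 1 then show ?thesis by (intro exI[of _ "\<lambda>i j. i"]) auto
  next
    case 2 then show ?thesis by (intro exI[of _ "\<lambda>i j. j"]) auto
  next
    case 3 then show ?thesis by (intro exI[of _ "\<lambda>i j. i"]) auto
  next
    case 4
    show ?thesis
    proof (intro exI[of _ idx] conjI allI)
      fix i j :: nat show "idx i j = i \<or> idx i j = j" by (rule idx_cases)
      have "u i * v j = mul1 (omul a b) (e (idx i j))" using 4 by (simp add: sig_def sig_mul ee)
      moreover have "u (idx i j) * v (idx i j) = mul1 (omul a b) (e (idx i j))"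
        using 4 by (simp add: sig_def sig_mul ee_idem)
      ultimately show "u i * v j = u (idx i j) * v (idx i j)" by simp
    next
      fix i :: nat show "(\<forall>j\<ge>i. idx i j = i) \<or> (\<forall>j\<ge>i. idx i j = j)"
      proof (cases D1)
        case True then have "\<forall>j\<ge>i. idx i j = i" by (auto simp: idx_def)
        then show ?thesis ..
      next
        case False then have "\<forall>j\<ge>i. idx i j = j" by (auto simp: idx_def)
        then show ?thesis ..
      qed
    next
      fix j :: nat show "(\<forall>i\<ge>j. idx i j = j) \<or> (\<forall>i\<ge>j. idx i j = i)"
      proof (cases D1)
        case True then have "\<forall>i\<ge>j. idx i j = j" by (auto simp: idx_def)
        then show ?thesis ..
      next
        case False then have "\<forall>i\<ge>j. idx i j = i" by (auto simp: idx_def)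
        then show ?thesis ..
      qed
    qed
  qed
qed

lemma prod_Sg:
  assumes "u \<in> Sg" "v \<in> Sg"
  shows "(\<lambda>j. u j * v j) \<in> Sg"
proof -
  consider x y where "u = (\<lambda>j. x)" "v = (\<lambda>j. y)" | x b where "u = (\<lambda>j. x)" "v = sig b"
    | a y where "u = sig a" "v = (\<lambda>j. y)" | a b where "u = sig a" "v = sig b"
    using assms unfolding Sg_def by blast
  then show ?thesis
  proof cases
    case 1 then show ?thesis by (auto simp: Sg_def)
  next
    case 2 then have "(\<lambda>j. u j * v j) = sig (omul (Some x) b)" by (simp add: sig_def cst_sig fun_eq_iff)
    then show ?thesis by (simp add: Sg_def)
  next
    case 3 then have "(\<lambda>j. u j * v j) = sig (omul a (Some y))" by (simp add: sig_def sig_cst fun_eq_iff)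
    then show ?thesis by (simp add: Sg_def)
  next
    case 4 then have "(\<lambda>j. u j * v j) = sig (omul a b)" by (simp add: sig_def sig_mul ee_idem fun_eq_iff)
    then show ?thesis by (simp add: Sg_def)
  qed
qed

lemma mY_Sg:
  assumes "u \<in> Sg" "v \<in> Sg"
  shows "mY (sf u) (sf v) = sf (\<lambda>j. u j * v j)"
proof (rule mY_sf)
  fix i j
  obtain g where g: "\<forall>i j. g i j = i \<or> g i j = j" "\<forall>i j. u i * v j = u (g i j) * v (g i j)"
    using pattern[OF assms] by blast
  then show "u i * v j = u i * v i \<or> u i * v j = u j * v j" by metis
qed

end

context cs begin

lemma D1E: "D1 \<Longrightarrow> i \<le> j \<Longrightarrow> e i * e j = e i" by (simp add: D1_def)
lemma D1E': "D1 \<Longrightarrow> i \<le> j \<Longrightarrow> e j * e i = e i" using D1E cen by metis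
lemma D2E: "\<not> D1 \<Longrightarrow> i \<le> j \<Longrightarrow> e i * e j = e j" using dir unfolding D1_def by blast
lemma D2E': "\<not> D1 \<Longrightarrow> i \<le> j \<Longrightarrow> e j * e i = e j" using D2E cen by metis

lemma sig_step: "e k * e l = e l \<Longrightarrow> sig a l = sig a k * e l"
  by (simp add: sig_def mul1_assoc)
lemma sig_step2: "e k * e l = e k \<Longrightarrow> sig a k * e l = sig a k"
  by (simp add: sig_def mul1_assoc)

lemma L1:
  assumes "\<forall>K. \<exists>k\<ge>K. sig a k = sig b k"
  shows "\<exists>K. \<forall>k\<ge>K. sig a k = sig b k"
proof (cases D1)
  case True
  have "\<forall>l\<ge>0. sig a l = sig b l"
  proof (intro allI impI)
    fix l :: nat
    obtain k where k: "k \<ge> l" "sig a k = sig b k" using assms by blast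
    have "e k * e l = e l" using D1E'[OF True k(1)] .
    then show "sig a l = sig b l" using sig_step[of k l a] sig_step[of k l b] k(2) by simp
  qed
  then show ?thesis by blast
next
  case False
  obtain k where k: "sig a k = sig b k" using assms by blast
  have "\<forall>l\<ge>k. sig a l = sig b l"
  proof (intro allI impI)
    fix l :: nat assume "k \<le> l"
    then have "e k * e l = e l" using D2E[OF False] by simp
    then show "sig a l = sig b l" using sig_step[of k l a] sig_step[of k l b] k by simp
  qed
  then show ?thesis by blast
qed

lemma L2:
  assumes "\<forall>K. \<exists>k\<ge>K. sig a k = c"
  shows "\<exists>K. \<forall>k\<ge>K. sig a k = c"
proof -
  obtain k0 where k0: "sig a k0 = c" using assms by blast
  have "\<forall>l\<ge>k0. sig a l = c"
  proof (intro allI impI)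
    fix l :: nat assume l: "k0 \<le> l"
    obtain k' where k': "k' \<ge> l" "sig a k' = c" using assms by blast
    show "sig a l = c"
    proof (cases D1)
      case True
      have "sig a l = sig a k' * e l" using D1E'[OF True k'(1)] by (rule sig_step)
      also have "\<dots> = sig a k0 * e l" using k' k0 by simp
      also have "\<dots> = sig a k0" using D1E[OF True l] by (rule sig_step2)
      finally show ?thesis using k0 by simp
    next
      case False
      have "sig a l = sig a k0 * e l" using D2E[OF False l] by (rule sig_step)
      also have "\<dots> = sig a k' * e l" using k' k0 by simp
      also have "\<dots> = sig a k'" using D2E'[OF False k'(1)] by (rule sig_step2)
      finally show ?thesis using k' by simp
    qed
  qed
  then show ?thesis by blast
qed

lemma coin:
  assumes "sig b j = sig a i"
  shows "\<exists>k. (k = i \<or> k = j) \<and> sig a k = sig b k \<and> sig b k = sig b j"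
proof (intro exI conjI)
  let ?k = "idx i j"
  show "?k = i \<or> ?k = j" by (rule idx_cases)
  have eij: "e i * e j = e ?k" by (rule ee)
  have eji: "e j * e i = e ?k" using eij cen by metis
  have A: "sig a ?k = sig b j"
  proof -
    have "sig a ?k = sig a i * e j" by (simp add: sig_def mul1_assoc eij)
    also have "\<dots> = sig b j * e j" using assms by simp
    also have "\<dots> = sig b j" by (simp add: sig_def mul1_assoc ee_idem)
    finally show ?thesis .
  qed
  have B: "sig b ?k = sig b j"
  proof -
    have "sig b ?k = sig b j * e i" by (simp add: sig_def mul1_assoc eji)
    also have "\<dots> = sig a i * e i" using assms by simp
    also have "\<dots> = sig a i" by (simp add: sig_def mul1_assoc ee_idem)
    finally show ?thesis using assms by simp
  qed
  show "sig a ?k = sig b ?k" using A B by simp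
  show "sig b ?k = sig b j" by (rule B)
qed

lemma ev_ne:
  assumes "sf (sig b) \<notin> range pr"
  shows "eventually (\<lambda>j. sig b j \<noteq> x) sequentially"
proof (rule ccontr)
  assume "\<not> eventually (\<lambda>j. sig b j \<noteq> x) sequentially"
  then have "\<forall>K. \<exists>k\<ge>K. sig b k = x" by (auto simp: eventually_sequentially)
  then obtain K where "\<forall>k\<ge>K. sig b k = x" using L2 by blast
  then have "sf (sig b) = pr x" by (auto simp: sf_eq_pr eventually_sequentially)
  then show False using assms by auto
qed

lemma L3:
  assumes ne: "sf (sig a) \<noteq> sf (sig b)" and np: "sf (sig b) \<notin> range pr"
  shows "eventually (\<lambda>j. sig b j \<notin> range (sig a)) sequentially"
proof (rule ccontr)
  assume "\<not> eventually (\<lambda>j. sig b j \<notin> range (sig a)) sequentially"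
  then have fr: "\<forall>K. \<exists>j\<ge>K. sig b j \<in> range (sig a)" by (auto simp: eventually_sequentially)
  show False
  proof (cases "\<forall>K. \<exists>k\<ge>K. sig a k = sig b k")
    case True
    then obtain K where "\<forall>k\<ge>K. sig a k = sig b k" using L1 by blast
    then have "sf (sig a) = sf (sig b)" by (intro sf_cong) (auto simp: eventually_sequentially)
    then show False using ne by simp
  next
    case False
    then obtain K0 where K0: "\<forall>k\<ge>K0. sig a k \<noteq> sig b k" by auto
    have fr2: "\<forall>K. \<exists>j\<ge>K. sig b j \<in> sig b ` {..<K0}"
    proof
      fix K
      obtain j where j: "j \<ge> max K K0" "sig b j \<in> range (sig a)" using fr by blast
      then obtain i where i: "sig b j = sig a i" by auto
      obtain k where k: "sig a k = sig b k" "sig b k = sig b j" using coin[OF i] by blast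
      have "k < K0" using K0 k(1) by (meson not_le)
      then have "sig b j \<in> sig b ` {..<K0}" using k(2) by (metis image_eqI lessThan_iff)
      then show "\<exists>j\<ge>K. sig b j \<in> sig b ` {..<K0}" using j(1) by auto
    qed
    have "\<exists>c. \<forall>K. \<exists>k\<ge>K. sig b k = c"
    proof (rule ccontr)
      assume "\<not> (\<exists>c. \<forall>K. \<exists>k\<ge>K. sig b k = c)"
      then have "\<forall>c\<in>sig b ` {..<K0}. eventually (\<lambda>j. sig b j \<noteq> c) sequentially"
        by (auto simp: eventually_sequentially)
      then have "eventually (\<lambda>j. \<forall>c\<in>sig b ` {..<K0}. sig b j \<noteq> c) sequentially"
        by (intro eventually_ball_finite) auto
      then obtain N where "\<forall>j\<ge>N. sig b j \<notin> sig b ` {..<K0}" by (auto simp: eventually_sequentially)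
      then show False using fr2 by blast
    qed
    then obtain c where "\<forall>K. \<exists>k\<ge>K. sig b k = c" by blast
    then obtain K where "\<forall>k\<ge>K. sig b k = c" using L2 by blast
    then have "sf (sig b) = pr c" by (auto simp: sf_eq_pr eventually_sequentially)
    then show False using np by auto
  qed
qed

end

lemma mem_pr[simp]: "A \<in> pr x \<longleftrightarrow> x \<in> A" by (simp add: pr_def)
lemma Wn_iff: "G \<in> Wn F A \<longleftrightarrow> G = F \<or> (F \<notin> range pr \<and> (\<exists>x\<in>A. G = pr x))"
  by (auto simp: Wn_def)
lemma Wn_mono: "A \<subseteq> B \<Longrightarrow> Wn F A \<subseteq> Wn F B" unfolding Wn_def by blast
lemma Wn_pr: "Wn (pr x) A = {pr x}" by (auto simp: Wn_iff)
lemma Wn_self: "F \<in> Wn F A" by (simp add: Wn_iff)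
lemma Wn_disj:
  assumes "F \<noteq> G" "A \<in> F" "B \<in> G" "A \<inter> B = {}"
  shows "Wn F A \<inter> Wn G B = {}"
proof -
  { fix H assume H: "H \<in> Wn F A" "H \<in> Wn G B"
    have False
    proof (cases "H = F")
      case True
      with H(2) assms(1) obtain x where "x \<in> B" "F = pr x" by (auto simp: Wn_iff)
      then show False using assms(2,4) by auto
    next
      case False
      with H(1) obtain x where x: "x \<in> A" "H = pr x" by (auto simp: Wn_iff)
      show False
      proof (cases "H = G")
        case True
        then show False using x assms(3,4) by auto
      next
        case False
        with H(2) obtain y where "y \<in> B" "H = pr y" by (auto simp: Wn_iff)
        then show False using x assms(4) by (auto simp: pr_inj)
      qed
    qed }
  then show ?thesis by blast
qed

context cs begin

lemma Y_pr: "pr x \<in> Y" unfolding Y_def Sg_def by (auto simp: sf_const[symmetric])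
lemma Y_sig: "sf (sig a) \<in> Y" unfolding Y_def Sg_def by auto
lemma Y_cases:
  assumes "F \<in> Y"
  obtains x where "F = pr x" | a where "F = sf (sig a)" "F \<notin> range pr"
  using assms unfolding Y_def Sg_def by (auto simp: sf_const)
lemma Y_UNIV: "F \<in> Y \<Longrightarrow> UNIV \<in> F" unfolding Y_def by auto
lemma Y_Int: "F \<in> Y \<Longrightarrow> A \<in> F \<Longrightarrow> B \<in> F \<Longrightarrow> A \<inter> B \<in> F" unfolding Y_def by (auto simp: sf_Int)
lemma Wn_sub: "F \<in> Y \<Longrightarrow> Wn F A \<subseteq> Y" by (auto simp: Wn_iff Y_pr)

definition "OP U \<longleftrightarrow> U \<subseteq> Y \<and> (\<forall>F\<in>U. \<exists>A\<in>F. Wn F A \<subseteq> U)"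
definition "Top = topology OP"

lemma istop: "istopology OP"
  unfolding istopology_def
proof (intro conjI allI impI)
  fix S T assume S: "OP S" and T: "OP T"
  show "OP (S \<inter> T)" unfolding OP_def
  proof (intro conjI ballI)
    show "S \<inter> T \<subseteq> Y" using S by (auto simp: OP_def)
    fix F assume F: "F \<in> S \<inter> T"
    have "\<exists>A\<in>F. Wn F A \<subseteq> S" "\<exists>A\<in>F. Wn F A \<subseteq> T" using S T F by (auto simp: OP_def)
    then obtain A B where A: "A \<in> F" "Wn F A \<subseteq> S" and B: "B \<in> F" "Wn F B \<subseteq> T"
      by blast
    have "F \<in> Y" using F S by (auto simp: OP_def)
    then have "A \<inter> B \<in> F" using A B Y_Int by blast
    moreover have "Wn F (A \<inter> B) \<subseteq> S \<inter> T" using A B Wn_mono[of "A \<inter> B"] by blast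
    ultimately show "\<exists>C\<in>F. Wn F C \<subseteq> S \<inter> T" by blast
  qed
next
  fix K assume K: "\<forall>S\<in>K. OP S"
  show "OP (\<Union>K)" unfolding OP_def
  proof (intro conjI ballI)
    show "\<Union>K \<subseteq> Y" using K by (auto simp: OP_def)
    fix F assume "F \<in> \<Union>K"
    then obtain S where "S \<in> K" "F \<in> S" by blast
    then have "\<exists>A\<in>F. Wn F A \<subseteq> S" using K by (auto simp: OP_def)
    then obtain A where "A \<in> F" "Wn F A \<subseteq> S" by blast
    then show "\<exists>A\<in>F. Wn F A \<subseteq> \<Union>K" using \<open>S \<in> K\<close> by blast
  qed
qed

lemma openin_Top: "openin Top U \<longleftrightarrow> U \<subseteq> Y \<and> (\<forall>F\<in>U. \<exists>A\<in>F. Wn F A \<subseteq> U)"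
  unfolding Top_def using istop by (simp add: OP_def)

lemma open_Y: "openin Top Y"
  unfolding openin_Top using Y_UNIV Wn_sub by blast

lemma topspace_Top: "topspace Top = Y"
  using open_Y openin_subset by (auto simp: openin_Top topspace_def)

lemma open_Wn: "F \<in> Y \<Longrightarrow> A \<in> F \<Longrightarrow> openin Top (Wn F A)"
  unfolding openin_Top
proof (intro conjI ballI)
  assume "F \<in> Y" "A \<in> F"
  then show "Wn F A \<subseteq> Y" using Wn_sub by blast
  fix G assume G: "G \<in> Wn F A"
  show "\<exists>B\<in>G. Wn G B \<subseteq> Wn F A"
  proof (cases "G = F")
    case True then show ?thesis using \<open>A \<in> F\<close> by blast
  next
    case False
    then obtain x where "G = pr x" using G by (auto simp: Wn_iff)
    then show ?thesis using G by (auto simp: Wn_pr)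
  qed
qed

lemma open_prs: "S \<subseteq> range pr \<Longrightarrow> openin Top S"
  unfolding openin_Top
proof (intro conjI ballI)
  assume S: "S \<subseteq> range pr"
  then show "S \<subseteq> Y" using Y_pr by blast
  fix F assume "F \<in> S"
  then obtain x where "F = pr x" using S by blast
  then show "\<exists>A\<in>F. Wn F A \<subseteq> S" using \<open>F \<in> S\<close> by (auto simp: Wn_pr)
qed

lemma compl_x:
  assumes "G \<in> Y" "G \<noteq> pr x"
  shows "- {x} \<in> G"
  using assms(1)
proof (cases rule: Y_cases)
  case (1 y) then show ?thesis using assms(2) by auto
next
  case (2 b)
  then show ?thesis using ev_ne[of b x] by (simp add: sf_def)
qed

lemma compl_range:
  assumes "G \<in> Y" "G \<notin> range pr" "G \<noteq> sf (sig a)"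
  shows "- range (sig a) \<in> G"
  using assms(1)
proof (cases rule: Y_cases)
  case (1 y) then show ?thesis using assms(2) by auto
next
  case (2 b)
  then show ?thesis using L3[of a b] assms(3) by (simp add: sf_def)
qed

lemma sepY:
  assumes "F \<in> Y" "G \<in> Y" "F \<noteq> G"
  shows "\<exists>A\<in>F. \<exists>B\<in>G. A \<inter> B = {}"
  using assms(1)
proof (cases rule: Y_cases)
  case (1 x)
  then have "{x} \<in> F" "- {x} \<in> G" using compl_x assms by auto
  then show ?thesis by blast
next
  case (2 a)
  show ?thesis
  proof (cases "G \<in> range pr")
    case True
    then obtain y where y: "G = pr y" by blast
    then have "{y} \<in> G" "- {y} \<in> F" using compl_x assms by auto
    then show ?thesis by blast
  next
    case False
    then have "- range (sig a) \<in> G" using compl_range assms 2 by metis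
    moreover have "range (sig a) \<in> F" using 2 by (simp add: sf_def)
    ultimately show ?thesis by blast
  qed
qed

lemma haus: "Hausdorff_space Top"
  unfolding Hausdorff_space_def topspace_Top
proof (intro allI impI)
  fix F G assume h: "F \<in> Y \<and> G \<in> Y \<and> F \<noteq> G"
  then obtain A B where "A \<in> F" "B \<in> G" "A \<inter> B = {}" using sepY by blast
  then show "\<exists>U V. openin Top U \<and> openin Top V \<and> F \<in> U \<and> G \<in> V \<and> disjnt U V"
    using h open_Wn Wn_self Wn_disj unfolding disjnt_def by metis
qed

lemma closed_pr: "closedin Top {pr x}"
  unfolding closedin_def topspace_Top
proof (intro conjI)
  show "{pr x} \<subseteq> Y" using Y_pr by auto
  show "openin Top (Y - {pr x})" unfolding openin_Top
  proof (intro conjI ballI)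
    show "Y - {pr x} \<subseteq> Y" by auto
    fix G assume G: "G \<in> Y - {pr x}"
    then obtain A B where AB: "A \<in> pr x" "B \<in> G" "A \<inter> B = {}" using sepY[of "pr x" G] Y_pr by force
    then have "Wn (pr x) A \<inter> Wn G B = {}" using G by (intro Wn_disj) auto
    then have "Wn G B \<subseteq> Y - {pr x}" using Wn_sub[of G B] G by (auto simp: Wn_pr)
    then show "\<exists>B\<in>G. Wn G B \<subseteq> Y - {pr x}" using AB by blast
  qed
qed

lemma closed_germ:
  assumes F: "F = sf (sig a)" "F \<notin> range pr" and A: "A \<in> F" "A \<subseteq> range (sig a)"
  shows "closedin Top (Wn F A)"
  unfolding closedin_def topspace_Top
proof (intro conjI)
  have FY: "F \<in> Y" using F Y_sig by simp
  show "Wn F A \<subseteq> Y" using Wn_sub[OF FY] .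
  show "openin Top (Y - Wn F A)" unfolding openin_Top
  proof (intro conjI ballI)
    show "Y - Wn F A \<subseteq> Y" by auto
    fix G assume G: "G \<in> Y - Wn F A"
    then have GF: "G \<noteq> F" using Wn_self by blast
    have "\<exists>B\<in>G. A \<inter> B = {}"
    proof (cases "G \<in> range pr")
      case True
      then obtain y where y: "G = pr y" by blast
      then have "y \<notin> A" using G F by (auto simp: Wn_iff)
      then show ?thesis using y by (intro bexI[of _ "{y}"]) auto
    next
      case False
      then have "- range (sig a) \<in> G" using compl_range G GF F by blast
      then show ?thesis using A by (intro bexI[of _ "- range (sig a)"]) auto
    qed
    then obtain B where B: "B \<in> G" "A \<inter> B = {}" by blast
    then have "Wn F A \<inter> Wn G B = {}" using GF A by (intro Wn_disj) auto
    then have "Wn G B \<subseteq> Y - Wn F A" using Wn_sub[of G B] G by auto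
    then show "\<exists>B\<in>G. Wn G B \<subseteq> Y - Wn F A" using B by blast
  qed
qed

lemma zerodim: "Top dim_le 0"
  unfolding dimension_le_0_neighbourhood_base_of_clopen neighbourhood_base_of
proof (intro allI impI)
  fix W F assume h: "openin Top W \<and> F \<in> W"
  then have FY: "F \<in> Y" using openin_Top by blast
  obtain A where A: "A \<in> F" "Wn F A \<subseteq> W" using h openin_Top by blast
  from FY show "\<exists>U V. openin Top U \<and> (closedin Top V \<and> openin Top V) \<and> F \<in> U \<and> U \<subseteq> V \<and> V \<subseteq> W"
  proof (cases rule: Y_cases)
    case (1 x)
    then have "Wn F A = {pr x}" by (simp add: Wn_pr)
    then show ?thesis using A 1 closed_pr open_Wn[OF FY A(1)] by (metis Wn_self order_refl)
  next
    case (2 a)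
    let ?A = "A \<inter> range (sig a)"
    have "range (sig a) \<in> F" using 2 by (simp add: sf_def)
    then have A': "?A \<in> F" using Y_Int FY A by blast
    have "closedin Top (Wn F ?A)" using 2 A' by (intro closed_germ) auto
    moreover have "openin Top (Wn F ?A)" using open_Wn[OF FY A'] .
    moreover have "Wn F ?A \<subseteq> W" using A Wn_mono[of ?A A F] by blast
    ultimately show ?thesis using Wn_self by blast
  qed
qed

end

context cs begin

lemma W_ev:
  assumes "A \<in> sf w"
  shows "\<exists>K. \<forall>k\<ge>K. pr (w k) \<in> Wn (sf w) A"
proof (cases "sf w \<in> range pr")
  case True
  then obtain c where c: "sf w = pr c" by blast
  then obtain K where "\<forall>k\<ge>K. w k = c" by (auto simp: sf_eq_pr eventually_sequentially)
  then show ?thesis using c Wn_self by metis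
next
  case False
  from assms obtain K where "\<forall>k\<ge>K. w k \<in> A" by (auto simp: sf_def eventually_sequentially)
  then show ?thesis using False by (auto simp: Wn_iff)
qed

lemma Y_rep: "F \<in> Y \<Longrightarrow> \<exists>u\<in>Sg. F = sf u" unfolding Y_def by auto

lemma mY_pr_pr: "mY (pr a) (pr b) = pr (a * b)"
  using mY_sf[of "\<lambda>_. a" "\<lambda>_. b"] by (simp add: sf_const)
lemma mY_pr_sf: "mY (pr c) (sf v) = sf (\<lambda>j. c * v j)"
  using mY_sf[of "\<lambda>_. c" v] by (simp add: sf_const)
lemma mY_sf_pr: "mY (sf u) (pr c) = sf (\<lambda>j. u j * c)"
  using mY_sf[of u "\<lambda>_. c"] by (simp add: sf_const)

lemma mY_closed: "F \<in> Y \<Longrightarrow> G \<in> Y \<Longrightarrow> mY F G \<in> Y"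
proof -
  assume "F \<in> Y" "G \<in> Y"
  then obtain u v where u: "u \<in> Sg" "F = sf u" and v: "v \<in> Sg" "G = sf v" using Y_rep by blast
  then have "mY F G = sf (\<lambda>j. u j * v j)" using mY_Sg by simp
  moreover have "(\<lambda>j. u j * v j) \<in> Sg" using prod_Sg u v by blast
  ultimately show ?thesis unfolding Y_def by blast
qed

lemma nbhd:
  assumes FY: "F \<in> Y" and GY: "G \<in> Y" and V: "openin Top V" "mY F G \<in> V"
  shows "\<exists>U1 U2. openin Top U1 \<and> openin Top U2 \<and> F \<in> U1 \<and> G \<in> U2 \<and> (\<forall>F'\<in>U1. \<forall>G'\<in>U2. mY F' G' \<in> V)"
proof -
  obtain u v where u: "u \<in> Sg" "F = sf u" and v: "v \<in> Sg" "G = sf v" using Y_rep FY GY by blast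
  define w where "w = (\<lambda>j. u j * v j)"
  have H: "mY F G = sf w" using u v mY_Sg w_def by simp
  obtain A where A: "A \<in> sf w" "Wn (sf w) A \<subseteq> V" using V H openin_Top by metis
  obtain K where K: "\<forall>k\<ge>K. pr (w k) \<in> Wn (sf w) A" using W_ev[OF A(1)] by blast
  obtain g where g: "\<forall>i j. g i j = i \<or> g i j = j" "\<forall>i j. u i * v j = u (g i j) * v (g i j)"
     "\<forall>i. (\<forall>j\<ge>i. g i j = i) \<or> (\<forall>j\<ge>i. g i j = j)"
     "\<forall>j. (\<forall>i\<ge>j. g i j = j) \<or> (\<forall>i\<ge>j. g i j = i)"
    using pattern[OF u(1) v(1)] by blast
  have gw: "u i * v j = w (g i j)" for i j using g(2) w_def by simp
  let ?U1 = "Wn F (u ` {K..})" and ?U2 = "Wn G (v ` {K..})"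
  have tu: "u ` {K..} \<in> F" using u by (auto simp: sf_def eventually_sequentially)
  have tv: "v ` {K..} \<in> G" using v by (auto simp: sf_def eventually_sequentially)
  have main: "mY F' G' \<in> Wn (sf w) A" if F': "F' \<in> ?U1" and G': "G' \<in> ?U2" for F' G'
  proof -
    have F'c: "F' = F \<or> (\<exists>i\<ge>K. F' = pr (u i))" using F' by (auto simp: Wn_iff)
    have G'c: "G' = G \<or> (\<exists>j\<ge>K. G' = pr (v j))" using G' by (auto simp: Wn_iff)
    show ?thesis
    proof (cases "F' = F")
      case True
      show ?thesis
      proof (cases "G' = G")
        case True
        then show ?thesis using \<open>F' = F\<close> H Wn_self by metis
      next
        case False
        then obtain j where j: "j \<ge> K" "G' = pr (v j)" using G'c by blast
        have "mY F' G' = sf (\<lambda>i. u i * v j)" using True j u mY_sf_pr by metis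
        also have "(\<lambda>i. u i * v j) = (\<lambda>i. w (g i j))" using gw by blast
        finally have eq: "mY F' G' = sf (\<lambda>i. w (g i j))" .
        show ?thesis
        proof (cases "\<forall>i\<ge>j. g i j = j")
          case True
          then have "sf (\<lambda>i. w (g i j)) = sf (\<lambda>i. w j)" by (intro sf_cong) (auto simp: eventually_sequentially intro!: exI[of _ j])
          then show ?thesis using eq K j by (simp add: sf_const)
        next
          case False
          then have "\<forall>i\<ge>j. g i j = i" using g(4) by blast
          then have "sf (\<lambda>i. w (g i j)) = sf w" by (intro sf_cong) (auto simp: eventually_sequentially intro!: exI[of _ j])
          then show ?thesis using eq Wn_self by simp
        qed
      qed
    next
      case False
      then obtain i where i: "i \<ge> K" "F' = pr (u i)" using F'c by blast
      show ?thesis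
      proof (cases "G' = G")
        case True
        have "mY F' G' = sf (\<lambda>j. u i * v j)" using True i v mY_pr_sf by metis
        also have "(\<lambda>j. u i * v j) = (\<lambda>j. w (g i j))" using gw by blast
        finally have eq: "mY F' G' = sf (\<lambda>j. w (g i j))" .
        show ?thesis
        proof (cases "\<forall>j\<ge>i. g i j = i")
          case True
          then have "sf (\<lambda>j. w (g i j)) = sf (\<lambda>j. w i)" by (intro sf_cong) (auto simp: eventually_sequentially intro!: exI[of _ i])
          then show ?thesis using eq K i by (simp add: sf_const)
        next
          case False
          then have "\<forall>j\<ge>i. g i j = j" using g(3) by blast
          then have "sf (\<lambda>j. w (g i j)) = sf w" by (intro sf_cong) (auto simp: eventually_sequentially intro!: exI[of _ i])
          then show ?thesis using eq Wn_self by simp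
        qed
      next
        case False
        then obtain j where j: "j \<ge> K" "G' = pr (v j)" using G'c by blast
        have "mY F' G' = pr (u i * v j)" using i j mY_pr_pr by metis
        then have "mY F' G' = pr (w (g i j))" using gw by metis
        moreover have "g i j \<ge> K" using g(1) i j by metis
        ultimately show ?thesis using K by simp
      qed
    qed
  qed
  show ?thesis
  proof (intro exI conjI)
    show "openin Top ?U1" using open_Wn[OF FY tu] .
    show "openin Top ?U2" using open_Wn[OF GY tv] .
    show "F \<in> ?U1" "G \<in> ?U2" by (rule Wn_self)+
    show "\<forall>F'\<in>?U1. \<forall>G'\<in>?U2. mY F' G' \<in> V" using main A(2) by blast
  qed
qed

lemma cont: "continuous_map (prod_topology Top Top) Top (\<lambda>(x, y). mY x y)"
  unfolding continuous_map_def topspace_prod_topology topspace_Top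
proof (intro conjI allI impI)
  show "(\<lambda>(x, y). mY x y) \<in> Y \<times> Y \<rightarrow> Y" using mY_closed by auto
  fix V assume V: "openin Top V"
  show "openin (prod_topology Top Top) {x \<in> Y \<times> Y. (case x of (x, y) \<Rightarrow> mY x y) \<in> V}"
    unfolding openin_prod_topology_alt
  proof (intro allI impI)
    fix F G assume h: "(F, G) \<in> {x \<in> Y \<times> Y. (case x of (x, y) \<Rightarrow> mY x y) \<in> V}"
    then have FG: "F \<in> Y" "G \<in> Y" "mY F G \<in> V" by auto
    obtain U1 U2 where U: "openin Top U1" "openin Top U2" "F \<in> U1" "G \<in> U2"
      "\<forall>F'\<in>U1. \<forall>G'\<in>U2. mY F' G' \<in> V" using nbhd[OF FG(1,2) V FG(3)] by blast
    have "U1 \<subseteq> Y" "U2 \<subseteq> Y" using U(1,2) openin_Top by auto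
    then have "U1 \<times> U2 \<subseteq> {x \<in> Y \<times> Y. (case x of (x, y) \<Rightarrow> mY x y) \<in> V}" using U(5) by auto
    then show "\<exists>U V'. openin Top U \<and> openin Top V' \<and> F \<in> U \<and> G \<in> V' \<and> U \<times> V' \<subseteq> {x \<in> Y \<times> Y. (case x of (x, y) \<Rightarrow> mY x y) \<in> V}"
      using U by blast
  qed
qed

lemma assocY: "F \<in> Y \<Longrightarrow> G \<in> Y \<Longrightarrow> H \<in> Y \<Longrightarrow> mY (mY F G) H = mY F (mY G H)"
proof -
  assume "F \<in> Y" "G \<in> Y" "H \<in> Y"
  then obtain u v t where u: "u \<in> Sg" "F = sf u" and v: "v \<in> Sg" "G = sf v" and t: "t \<in> Sg" "H = sf t"
    using Y_rep by metis
  have "mY (mY F G) H = sf (\<lambda>j. u j * v j * t j)"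
    using u v t mY_Sg prod_Sg by simp
  moreover have "mY F (mY G H) = sf (\<lambda>j. u j * (v j * t j))"
    using u v t mY_Sg prod_Sg by simp
  ultimately show ?thesis by (simp add: mult.assoc)
qed

lemma TzS: "TzS_semigroup Top mY"
  unfolding TzS_semigroup_def topological_semigroup_def topspace_Top
  using mY_closed assocY cont haus zerodim by blast

lemma emb: "embedding_map (discrete_topology UNIV) Top pr"
proof (rule injective_open_imp_embedding_map)
  show "continuous_map (discrete_topology UNIV) Top pr" using Y_pr by (simp add: topspace_Top)
  show "open_map (discrete_topology UNIV) Top pr" unfolding open_map_def
    by (auto intro: open_prs)
  show "inj_on pr (topspace (discrete_topology UNIV))" by (auto simp: inj_on_def pr_inj)
qed

lemma not_closed: "\<not> closedin Top (range pr)"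
proof
  assume "closedin Top (range pr)"
  then have op: "openin Top (Y - range pr)" by (simp add: closedin_def topspace_Top)
  let ?F = "sf (sig None)"
  have np: "?F \<notin> range pr"
  proof
    assume "?F \<in> range pr"
    then obtain c where "?F = pr c" by blast
    then obtain K where "\<forall>k\<ge>K. e k = c" by (auto simp: sf_eq_pr eventually_sequentially sig_def)
    then have "e K = e (Suc K)" by simp
    then show False using einj by (simp add: inj_eq)
  qed
  have "?F \<in> Y - range pr" using Y_sig np by simp
  then obtain A where A: "A \<in> ?F" "Wn ?F A \<subseteq> Y - range pr" using op openin_Top by metis
  then obtain K where "\<forall>k\<ge>K. sig None k \<in> A" by (auto simp: sf_def eventually_sequentially)
  then have "sig None K \<in> A" by simp
  then have "pr (sig None K) \<in> Wn ?F A" using np by (auto simp: Wn_iff)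
  then show False using A by auto
qed

theorem not_TzS_closed: "\<not> TzS_closed TYPE('a)"
  unfolding TzS_closed_def TzS_closed_in_def
proof
  assume h: "\<forall>(T::'a set set topology) m (h::'a \<Rightarrow> 'a set set).
        TzS_semigroup T m \<and> inj h \<and> range h \<subseteq> topspace T \<and>
        (\<forall>x y. h (x * y) = m (h x) (h y)) \<and>
        embedding_map (discrete_topology UNIV) T h \<longrightarrow> closedin T (range h)"
  have "inj pr" by (auto simp: inj_on_def pr_inj)
  moreover have "range pr \<subseteq> topspace Top" using Y_pr topspace_Top by auto
  moreover have "\<forall>x y. pr (x * y) = mY (pr x) (pr y)" by (simp add: mY_pr_pr)
  ultimately have "closedin Top (range pr)" using h TzS emb by blast
  then show False using not_closed by simp
qed

end

theorem lemma5p1: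
  assumes "TzS_closed TYPE('a::semigroup_mult)"
  shows "chain_finite (center :: 'a set)"
proof (rule ccontr)
  assume "\<not> chain_finite (center :: 'a set)"
  then obtain C :: "'a set" where C: "C \<subseteq> center" "is_chain C" "infinite C"
    by (auto simp: chain_finite_def)
  obtain f :: "nat \<Rightarrow> 'a" where f: "inj f" "range f \<subseteq> C"
    using infinite_countable_subset[OF C(3)] by blast
  define col where "col S = (if f (Min S) * f (Max S) = f (Min S) then 0 else (1::nat))" for S :: "nat set"
  have "\<exists>Z t. Z \<subseteq> (UNIV::nat set) \<and> infinite Z \<and> t < 2 \<and> (\<forall>x\<in>Z. \<forall>y\<in>Z. x \<noteq> y \<longrightarrow> col {x, y} = t)"
    by (rule Ramsey2) (auto simp: col_def)
  then obtain Z t where Z: "infinite Z" "t < 2" "\<forall>x\<in>Z. \<forall>y\<in>Z. x \<noteq> y \<longrightarrow> col {x, y} = t" by blast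
  define e where "e = f \<circ> enumerate Z"
  have sm: "strict_mono (enumerate Z)" using strict_mono_enumerate[OF Z(1)] .
  have inZ: "enumerate Z n \<in> Z" for n using enumerate_in_set[OF Z(1)] .
  have eC: "e n \<in> C" for n using f(2) by (auto simp: e_def)
  have cen: "x * e j = e j * x" for x j
    using eC[of j] C(1) by (auto simp: center_def)
  have chain: "e i * e j \<in> {e i, e j}" for i j
    using eC[of i] eC[of j] C(2) by (auto simp: is_chain_def)
  have einj: "inj e" unfolding e_def using f(1) strict_mono_imp_inj_on[OF sm] by (simp add: inj_compose)
  have lt: "col {enumerate Z i, enumerate Z j} = t" if "i < j" for i j
    using Z(3) inZ sm that by (metis strict_mono_less less_irrefl)
  have dir: "(\<forall>i j. i \<le> j \<longrightarrow> e i * e j = e i) \<or> (\<forall>i j. i \<le> j \<longrightarrow> e i * e j = e j)"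
  proof (cases "t = 0")
    case True
    have "e i * e j = e i" if "i \<le> j" for i j
    proof (cases "i = j")
      case True then show ?thesis using chain[of i i] by simp
    next
      case False
      then have ij: "i < j" using that by simp
      then have mm: "enumerate Z i < enumerate Z j" using sm by (simp add: strict_mono_less)
      have "col {enumerate Z i, enumerate Z j} = 0" using lt[OF ij] \<open>t = 0\<close> by simp
      then show ?thesis using mm by (simp add: col_def e_def min_def max_def split: if_splits)
    qed
    then show ?thesis by blast
  next
    case False
    then have t1: "t = 1" using Z(2) by simp
    have "e i * e j = e j" if "i \<le> j" for i j
    proof (cases "i = j")
      case True then show ?thesis using chain[of i i] by simp
    next
      case False
      then have ij: "i < j" using that by simp
      then have mm: "enumerate Z i < enumerate Z j" using sm by (simp add: strict_mono_less)
      have "col {enumerate Z i, enumerate Z j} = 1" using lt[OF ij] t1 by simp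
      then have "e i * e j \<noteq> e i" using mm by (simp add: col_def e_def min_def max_def split: if_splits)
      then show ?thesis using chain[of i j] by auto
    qed
    then show ?thesis by blast
  qed
  interpret cs e by standard (rule cen, rule einj, rule dir)
  show False using not_TzS_closed assms by simp
qed
end
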